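(* Let $K\ge 3$, let $m_1<m_2<\cdots<m_K$ be pairwise co-prime positive integers with $m_1\ge 3$, let $M$ be a positive integer, and set $M_k=Mm_k$ for $k=1,\ldots,K$. Then $$D_2(M_1,\ldots,M_K)=Md,\qquad\text{where}\qquad d=\min_{I\subseteq\{1,\ldots,K\}}\Big\{\prod_{i\in I}m_i+\prod_{i\in\overline I}m_i\Big\},$$ with $\overline I=\{1,\ldots,K\}\setminus I$ and the empty product equal to $1$.
   Context: For a positive integer $n$ and an integer $x$, $\langle x\rangle_n$ denotes the remainder of $x$ modulo $n$, in $\{0,\ldots,n-1\}$, and $\mathbb Z_n=\{0,1,\ldots,n-1\}$. An $L$-set is a set with exactly $L$ elements. For a finite set $\mathcal A$ of nonnegative integers and a modulus $n_k$, the residue set is $R_k(\mathcal A)=\{\langle a\rangle_{n_k}: a\in\mathcal A\}$ (an unordered set, so repetitions collapse). For a modulus set $\mathcal N=\{n_1,\ldots,n_K\}$, the dynamic range $D_L(\mathcal N)=D_L(n_1,\ldots,n_K)$ is the minimal positive integer $D$ such that there exist two different $L$-sets $\mathcal A,\mathcal B\subseteq\mathbb Z_{D+1}$ with $R_k(\mathcal A)=R_k(\mathcal B)$ for every $k=1,\ldots,K$ (residues taken modulo $n_k$). *)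

theory Defs
  imports Main
begin

definition residue_set :: "nat \<Rightarrow> nat set \<Rightarrow> nat set" where
  "residue_set n A = (\<lambda>a. a mod n) ` A"

definition dynamic_range :: "nat \<Rightarrow> nat \<Rightarrow> (nat \<Rightarrow> nat) \<Rightarrow> nat" where
  "dynamic_range L K n = (LEAST D. 0 < D \<and>
     (\<exists>A B. A \<noteq> B \<and> card A = L \<and> card B = L \<and> A \<subseteq> {0..D} \<and> B \<subseteq> {0..D} \<and>
        (\<forall>k\<in>{1..K}. residue_set (n k) A = residue_set (n k) B)))"

end

theory Submission imports Defs "HOL-Number_Theory.Number_Theory" begin

lemma pair_res:
  assumes "residue_set n {a1,a2} = residue_set n {b1,b2}"
  shows "(a1 mod n = b1 mod n \<and> a2 mod n = b2 mod n) \<or> (a1 mod n = b2 mod n \<and> a2 mod n = b1 mod n)"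
  using assms unfolding residue_set_def by (simp add: doubleton_eq_iff)

lemma nat_cong_int:
  assumes "(a::nat) mod n = b mod n" shows "int n dvd int a - int b"
proof -
  have "[int a = int b] (mod int n)" using assms cong_int_iff unfolding cong_def by blast
  thus ?thesis by (simp add: cong_iff_dvd_diff)
qed

lemma prodM_dvd:
  fixes x M :: int and m :: "nat \<Rightarrow> nat"
  assumes "finite I" "I \<noteq> {}" "M \<noteq> 0"
    and cop: "\<And>i j. i \<in> I \<Longrightarrow> j \<in> I \<Longrightarrow> i \<noteq> j \<Longrightarrow> coprime (m i) (m j)"
    and d: "\<And>k. k \<in> I \<Longrightarrow> M * int (m k) dvd x"
  shows "M * int (prod m I) dvd x"
proof -
  obtain k0 where "k0 \<in> I" using assms by auto
  then have "M dvd x" using d[of k0] dvd_mult_left by blast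
  then obtain t where t: "x = M * t" by auto
  have "\<forall>k\<in>I. [t = 0] (mod int (m k))"
  proof
    fix k assume "k \<in> I"
    then have "M * int (m k) dvd M * t" using d t by simp
    then have "int (m k) dvd t" using assms(3) by simp
    thus "[t = 0] (mod int (m k))" by (simp add: cong_0_iff)
  qed
  moreover have "\<forall>i\<in>I. \<forall>j\<in>I. i \<noteq> j \<longrightarrow> coprime (int (m i)) (int (m j))" using cop by simp
  ultimately have "[t = 0] (mod (\<Prod>i\<in>I. int (m i)))" by (rule cong_cong_prod_coprime)
  then have "int (prod m I) dvd t" by (simp add: cong_0_iff)
  thus ?thesis using t by simp
qed

lemma dvd_le_D:
  fixes n x y D :: int
  assumes "n dvd x - y" "x \<noteq> y" "0 \<le> x" "x \<le> D" "0 \<le> y" "y \<le> D"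
  shows "n \<le> D"
proof -
  have "\<bar>n\<bar> \<le> \<bar>x - y\<bar>" using assms by (intro dvd_imp_le_int) auto
  thus ?thesis using assms by linarith
qed

lemma two_ineq:
  fixes a b :: nat assumes "a \<ge> 3" "b \<ge> 6" shows "2 * (a + b) \<le> a * b"
proof -
  have "(int a - 2) * (int b - 2) \<ge> 1 * 4" using assms by (intro mult_mono) auto
  hence "int (2 * (a + b)) \<le> int (a * b)" by (simp add: algebra_simps)
  thus ?thesis by linarith
qed

theorem theorem1:
  fixes K M :: nat and m :: "nat \<Rightarrow> nat"
  assumes "K \<ge> 3"
    and "\<And>i j. i \<in> {1..K} \<Longrightarrow> j \<in> {1..K} \<Longrightarrow> i < j \<Longrightarrow> m i < m j"
    and "\<And>i j. i \<in> {1..K} \<Longrightarrow> j \<in> {1..K} \<Longrightarrow> i \<noteq> j \<Longrightarrow> coprime (m i) (m j)"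
    and "m 1 \<ge> 3"
    and "M > 0"
  shows "dynamic_range 2 K (\<lambda>k. M * m k) =
    M * Min ((\<lambda>I. (\<Prod>i\<in>I. m i) + (\<Prod>i\<in>{1..K} - I. m i)) ` Pow {1..K})"
proof -
  note mono = assms(2) and copm = assms(3)
  define P where "P = (\<lambda>I. \<Prod>i\<in>I. m i)"
  define V where "V = (\<lambda>I. P I + P ({1..K} - I))"
  define d where "d = Min (V ` Pow {1..K})"
  have eqV: "(\<lambda>I. (\<Prod>i\<in>I. m i) + (\<Prod>i\<in>{1..K} - I. m i)) = V"
    by (simp add: V_def P_def)
  have mge: "m k \<ge> 3" if "k \<in> {1..K}" for k
  proof (cases "k = 1")
    case False
    then have "m 1 < m k" using mono[of 1 k] that assms(1) by auto
    then show ?thesis using assms(4) by linarith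
  qed (use assms(4) in simp)
  have Ppos: "P I \<ge> 1" if "I \<subseteq> {1..K}" for I
    unfolding P_def using mge that by (intro prod_ge_1) force
  have Pge: "P I \<ge> m k" if "I \<subseteq> {1..K}" "k \<in> I" for I k
  proof -
    have "m k dvd P I" unfolding P_def using that by (intro dvd_prodI) (auto intro: finite_subset)
    moreover have "P I > 0" using Ppos[OF that(1)] by simp
    ultimately show ?thesis by (simp add: dvd_imp_le)
  qed
  have cop: "coprime (P I) (P ({1..K} - I))" if "I \<subseteq> {1..K}" for I
    unfolding P_def
    by (intro prod_coprime_left prod_coprime_right copm) (use that in auto)
  have Psplit: "P {1..K} = P I * P ({1..K} - I)" if "I \<subseteq> {1..K}" for I
    unfolding P_def using that by (simp add: prod.subset_diff mult.commute)
  have fin: "finite (V ` Pow {1..K})" by simp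
  have dle: "d \<le> V I" if "I \<subseteq> {1..K}" for I
    unfolding d_def using that fin by (intro Min_le) auto
  have d2: "2 * d \<le> P {1..K}"
  proof -
    have s: "{1..K} - {1} = {2..K}" by auto
    have "P {2..K} = m 2 * P {3..K}" unfolding P_def using assms(1)
      by (subst prod.atLeast_Suc_atMost) (auto simp: numeral_3_eq_3)
    moreover have "P {3..K} = m 3 * P {4..K}" unfolding P_def using assms(1)
      by (subst prod.atLeast_Suc_atMost) (auto simp: numeral_eq_Suc)
    moreover have "P {4..K} \<ge> 1" using Ppos[of "{4..K}"] by auto
    moreover have "m 2 \<ge> 4" using mono[of 1 2] assms(1,4) by auto
    moreover have "m 3 \<ge> 5" using mono[of 2 3] mono[of 1 2] assms(1,4) by auto
    ultimately have "P {3..K} \<ge> m 3" "P {2..K} \<ge> m 2 * P {3..K}" "m 2 \<ge> 4" "m 3 \<ge> 5"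
      by (simp_all add: mult_le_mono2 [of 1, simplified])
    then have "P {2..K} \<ge> 4 * 5" by (meson le_trans mult_le_mono)
    then have Q: "P {2..K} \<ge> 6" by simp
    have "P {1..K} = m 1 * P {2..K}" unfolding P_def using assms(1)
      by (subst prod.atLeast_Suc_atMost) (auto simp: numeral_2_eq_2)
    moreover have "V {1} = m 1 + P {2..K}" unfolding V_def using s by (simp add: P_def)
    moreover have "d \<le> V {1}" using dle[of "{1}"] assms(1) by auto
    ultimately show ?thesis using two_ineq[OF assms(4) Q]
      by (metis (no_types, lifting) le_trans mult_le_mono2)
  qed
  have upper: "0 < M * d \<and> (\<exists>A B. A \<noteq> B \<and> card A = 2 \<and> card B = 2 \<and> A \<subseteq> {0..M*d} \<and> B \<subseteq> {0..M*d} \<and>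
        (\<forall>k\<in>{1..K}. residue_set (M * m k) A = residue_set (M * m k) B))"
  proof -
    have "d \<in> V ` Pow {1..K}" unfolding d_def using fin by (intro Min_in) auto
    then obtain I0 where I0: "I0 \<subseteq> {1..K}" "V I0 = d" by auto
    define J0 where "J0 = {1..K} - I0"
    have P0: "P {} = 1" by (simp add: P_def)
    have Pall: "P {1..K} \<ge> 1" using Ppos by simp
    have "I0 \<noteq> {}"
    proof
      assume "I0 = {}" then have "V I0 = 1 + P {1..K}" by (simp add: V_def P0)
      with I0 d2 show False by linarith
    qed
    then obtain k1 where k1: "k1 \<in> I0" by auto
    have "J0 \<noteq> {}"
    proof
      assume "J0 = {}" then have "I0 = {1..K}" using I0 J0_def by auto
      then have "V I0 = 1 + P {1..K}" by (simp add: V_def P0)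
      with I0 d2 show False by linarith
    qed
    then obtain k2 where k2: "k2 \<in> J0" by auto
    have J0s: "J0 \<subseteq> {1..K}" by (auto simp: J0_def)
    have PI3: "P I0 \<ge> 3" using Pge[OF I0(1) k1] mge k1 I0(1) by force
    have PJ3: "P J0 \<ge> 3" using Pge[OF J0s k2] mge k2 J0s by force
    have dsum: "d = P I0 + P J0" using I0 by (simp add: V_def J0_def)
    have copIJ: "coprime (P I0) (P J0)" using cop[OF I0(1)] by (simp add: J0_def)
    have neq: "P I0 \<noteq> P J0"
    proof
      assume "P I0 = P J0"
      with copIJ have "P I0 = 1" by simp
      with PI3 show False by simp
    qed
    define A where "A = {0, M * d}"
    define B where "B = {M * P I0, M * P J0}"
    have Md: "M * d = M * P I0 + M * P J0" by (simp add: dsum algebra_simps)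
    have "0 < M * d" using assms(5) dsum PI3 by simp
    moreover have "A \<noteq> B"
    proof
      assume "A = B"
      then have "0 \<in> B" unfolding A_def by auto
      then show False unfolding B_def using assms(5) PI3 PJ3 by auto
    qed
    moreover have "card A = 2" unfolding A_def using \<open>0 < M * d\<close> by simp
    moreover have "card B = 2" unfolding B_def using neq assms(5) by simp
    moreover have "A \<subseteq> {0..M*d}" unfolding A_def by auto
    moreover have "B \<subseteq> {0..M*d}" unfolding B_def using Md by auto
    moreover have "residue_set (M * m k) A = residue_set (M * m k) B" if k: "k \<in> {1..K}" for k
    proof (cases "k \<in> I0")
      case True
      have "m k dvd P I0" unfolding P_def using True I0(1) by (intro dvd_prodI) (auto intro: finite_subset)
      then have z: "(M * P I0) mod (M * m k) = 0" by (simp add: mult_dvd_mono)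
      have "(M * d) mod (M * m k) = (M * P J0) mod (M * m k)"
        using Md z by (metis add.left_neutral mod_add_left_eq)
      then show ?thesis unfolding A_def B_def residue_set_def using z assms(5) by simp
    next
      case False
      then have "k \<in> J0" using k by (simp add: J0_def)
      then have "m k dvd P J0" unfolding P_def using J0s by (intro dvd_prodI) (auto intro: finite_subset)
      then have z: "(M * P J0) mod (M * m k) = 0" by (simp add: mult_dvd_mono)
      have "(M * d) mod (M * m k) = (M * P I0) mod (M * m k)"
        using Md z by (metis add.right_neutral mod_add_right_eq)
      then show ?thesis unfolding A_def B_def residue_set_def using z assms(5) by (simp add: insert_commute)
    qed
    ultimately show ?thesis by blast
  qed
  have lower: "M * d \<le> D" if "0 < D" and "A \<noteq> B" "card A = 2" "card B = 2" "A \<subseteq> {0..D}" "B \<subseteq> {0..D}"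
     "\<forall>k\<in>{1..K}. residue_set (M * m k) A = residue_set (M * m k) B" for D A B
  proof -
    from that(3) obtain a1 a2 where Aeq: "A = {a1, a2}" "a1 \<noteq> a2" by (auto simp: card_2_iff)
    from that(4) obtain b1 b2 where Beq: "B = {b1, b2}" "b1 \<noteq> b2" by (auto simp: card_2_iff)
    have bnd: "a1 \<le> D" "a2 \<le> D" "b1 \<le> D" "b2 \<le> D" using that(5,6) Aeq Beq by auto
    define I where "I = {k\<in>{1..K}. a1 mod (M * m k) = b1 mod (M * m k) \<and> a2 mod (M * m k) = b2 mod (M * m k)}"
    define J where "J = {1..K} - I"
    have Is: "I \<subseteq> {1..K}" by (auto simp: I_def)
    have Ju: "J = {1..K} - I" by (simp add: J_def)
    have cI: "int M * int (m k) dvd int a1 - int b1 \<and> int M * int (m k) dvd int a2 - int b2" if "k \<in> I" for k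
      using that nat_cong_int[of a1 "M * m k" b1] nat_cong_int[of a2 "M * m k" b2] by (auto simp: I_def)
    have cJ: "int M * int (m k) dvd int a1 - int b2 \<and> int M * int (m k) dvd int a2 - int b1" if "k \<in> J" for k
    proof -
      have k: "k \<in> {1..K}" "k \<notin> I" using that by (auto simp: J_def)
      have "residue_set (M * m k) {a1, a2} = residue_set (M * m k) {b1, b2}"
        using \<open>\<forall>k\<in>{1..K}. _\<close> k Aeq Beq by auto
      from pair_res[OF this] k have "a1 mod (M * m k) = b2 mod (M * m k) \<and> a2 mod (M * m k) = b1 mod (M * m k)"
        by (auto simp: I_def)
      then show ?thesis using nat_cong_int[of a1 "M * m k" b2] nat_cong_int[of a2 "M * m k" b1] by auto
    qed
    have Mz: "int M \<noteq> 0" using assms(5) by simp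
    have copS: "\<And>i j. i \<in> S \<Longrightarrow> j \<in> S \<Longrightarrow> i \<noteq> j \<Longrightarrow> coprime (m i) (m j)" if "S \<subseteq> {1..K}" for S
      using copm that by blast
    have PMdvd: "int M * int (P S) dvd x" if "S \<subseteq> {1..K}" "S \<noteq> {}" "\<And>k. k \<in> S \<Longrightarrow> int M * int (m k) dvd x" for S x
      unfolding P_def by (rule prodM_dvd) (use that copS[OF that(1)] assms(5) in \<open>auto intro: finite_subset\<close>)
    have dP: "M * d \<le> M * P {1..K}" using d2 by simp
    show ?thesis
    proof (cases "I = {1..K}")
      case True
      have h1: "int M * int (P {1..K}) dvd int a1 - int b1" using PMdvd[of "{1..K}"] cI True assms(1) by auto
      have h2: "int M * int (P {1..K}) dvd int a2 - int b2" using PMdvd[of "{1..K}"] cI True assms(1) by auto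
      have "a1 \<noteq> b1 \<or> a2 \<noteq> b2" using that(2) Aeq Beq by auto
      then have "int M * int (P {1..K}) \<le> int D"
        using dvd_le_D[OF h1, of "int D"] dvd_le_D[OF h2, of "int D"] bnd by auto
      then show ?thesis using dP by (metis of_nat_le_iff of_nat_mult le_trans)
    next
      case nT: False
      show ?thesis
      proof (cases "I = {}")
        case True
        then have JU: "J = {1..K}" by (simp add: J_def)
        have h1: "int M * int (P {1..K}) dvd int a1 - int b2" using PMdvd[of "{1..K}"] cJ JU assms(1) by auto
        have h2: "int M * int (P {1..K}) dvd int a2 - int b1" using PMdvd[of "{1..K}"] cJ JU assms(1) by auto
        have "a1 \<noteq> b2 \<or> a2 \<noteq> b1" using that(2) Aeq Beq by auto
        then have "int M * int (P {1..K}) \<le> int D"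
          using dvd_le_D[OF h1, of "int D"] dvd_le_D[OF h2, of "int D"] bnd by auto
        then show ?thesis using dP by (metis of_nat_le_iff of_nat_mult le_trans)
      next
        case False
        have Jne: "J \<noteq> {}" using nT Is by (auto simp: J_def)
        have Js: "J \<subseteq> {1..K}" by (auto simp: J_def)
        define X where "X = int M * int (P I)"
        define Y where "Y = int M * int (P J)"
        have X1: "X dvd int a1 - int b1" "X dvd int a2 - int b2"
          unfolding X_def using PMdvd[OF Is False] cI by auto
        have Y1: "Y dvd int a1 - int b2" "Y dvd int a2 - int b1"
          unfolding Y_def using PMdvd[OF Js Jne] cJ by auto
        define S where "S = int a1 + int a2 - int b1 - int b2"
        have "X dvd S" using X1 unfolding S_def by (metis (no_types, lifting) dvd_add diff_add_eq add_diff_eq diff_diff_eq2 diff_add_eq_diff_diff_swap)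
        then obtain s where s: "S = X * s" by auto
        have "Y dvd S" using Y1 unfolding S_def by (metis (no_types, lifting) dvd_add diff_add_eq add_diff_eq diff_diff_eq2 diff_add_eq_diff_diff_swap)
        then have "int M * int (P J) dvd int M * (int (P I) * s)" using s by (simp add: X_def Y_def mult.assoc)
        then have "int (P J) dvd int (P I) * s" using Mz by simp
        moreover have "coprime (int (P J)) (int (P I))" using cop[OF Is] by (simp add: J_def coprime_commute)
        ultimately have "int (P J) dvd s" by (simp add: coprime_dvd_mult_right_iff)
        then obtain t where "s = int (P J) * t" by auto
        then have St: "S = int M * int (P {1..K}) * t" using s Psplit[OF Is] by (simp add: X_def J_def)
        show ?thesis
        proof (cases "S = 0")
          case False
          have "int M * int (P {1..K}) dvd S" using St by simp
          then have "\<bar>int M * int (P {1..K})\<bar> \<le> \<bar>S\<bar>" using False by (rule dvd_imp_le_int[rotated])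
          moreover have "\<bar>S\<bar> \<le> 2 * int D - 2" unfolding S_def using bnd Aeq(2) Beq(2) by linarith
          ultimately have "int (M * P {1..K}) \<le> 2 * int D - 2" by simp
          moreover have "2 * (M * d) \<le> M * P {1..K}" using d2 by (metis mult.left_commute mult_le_mono2)
          then have "int (2 * (M * d)) \<le> int (M * P {1..K})" by (simp only: of_nat_le_iff)
          ultimately show ?thesis by linarith
        next
          case True
          define u where "u = int a1 - int b1"
          define w where "w = int a1 - int b2"
          have "u \<noteq> 0" using True that(2) Aeq Beq unfolding u_def S_def by auto
          have "w \<noteq> 0" using True that(2) Aeq Beq unfolding w_def S_def by auto
          have "\<bar>X\<bar> \<le> \<bar>u\<bar>" using X1 \<open>u \<noteq> 0\<close> unfolding u_def by (intro dvd_imp_le_int) auto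
          moreover have "\<bar>Y\<bar> \<le> \<bar>w\<bar>" using Y1 \<open>w \<noteq> 0\<close> unfolding w_def by (intro dvd_imp_le_int) auto
          moreover have "\<bar>u\<bar> + \<bar>w\<bar> \<le> int D"
          proof (cases "(u \<ge> 0) = (w \<ge> 0)")
            case True
            have "int a1 - int a2 = u + w" using \<open>S = 0\<close> unfolding u_def w_def S_def by linarith
            then show ?thesis using True bnd by (auto simp: abs_if split: if_splits)
          next
            case False
            have "int b2 - int b1 = u - w" unfolding u_def w_def by linarith
            then show ?thesis using False bnd by (auto simp: abs_if split: if_splits)
          qed
          ultimately have "X + Y \<le> int D" by (simp add: X_def Y_def)
          moreover have "X + Y = int (M * V I)" by (simp add: X_def Y_def V_def J_def algebra_simps)
          moreover have "M * d \<le> M * V I" using dle[OF Is] by simp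
          ultimately show ?thesis by linarith
        qed
      qed
    qed
  qed

  have dyn: "dynamic_range 2 K (\<lambda>k. M * m k) = M * d"
    unfolding dynamic_range_def
    by (rule Least_equality) (use upper lower in blast)+
  show ?thesis unfolding eqV using dyn by (simp only: d_def)
qed

end
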